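(* Let $(X,d)$ be a proper metric space (every bounded closed set is compact) and let $f:X\to\mathbb{R}$ be continuous with $s[f]:X\to\mathbb{R}$ continuous. Then for every $x\in X$ with $s[f](x)\neq0$ there exist $T>0$ and a $1$-Lipschitz curve $\gamma:[0,T]\to X$ with $\gamma(0)=x$ and \[ f(\gamma(t))=f(x)-\int_0^t s[f](\gamma(s))\,ds\quad\text{for all } t\in[0,T]. \]
   Context: Local slope: $s[f](\bar x):=\limsup_{y\to\bar x}\frac{\max\{f(\bar x)-f(y),0\}}{d(\bar x,y)}$, with $s[f](\bar x)=0$ if $\bar x$ is isolated. *)

theory Defs
  imports "HOL-Analysis.Analysis"
begin

definition local_slope :: "('a::metric_space \<Rightarrow> real) \<Rightarrow> 'a \<Rightarrow> ereal" where
  "local_slope f x =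
     (if at x = bot then 0
      else Limsup (at x) (\<lambda>y. ereal (max (f x - f y) 0 / dist x y)))"

end

theory Submission
  imports Defs "HOL-Complex_Analysis.Great_Picard"
begin


lemma slope_nonneg: "0 \<le> local_slope f y"
proof (cases "at y = bot")
  case True then show ?thesis by (simp add: local_slope_def)
next
  case False
  have "ereal 0 \<le> Limsup (at y) (\<lambda>w. ereal (max (f y - f w) 0 / dist y w))"
    by (rule le_Limsup[OF False]) (auto intro!: always_eventually)
  with False show ?thesis by (simp add: local_slope_def zero_ereal_def)
qed

lemma slope_le:
  assumes "0 \<le> c" "d > 0" "\<forall>w. dist w z < d \<longrightarrow> f z - f w \<le> c * dist z w"
  shows "local_slope f z \<le> ereal c"
proof (cases "at z = bot")
  case True then show ?thesis using assms by (simp add: local_slope_def)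
next
  case False
  have "\<forall>\<^sub>F w in at z. ereal (max (f z - f w) 0 / dist z w) \<le> ereal c"
    unfolding eventually_at
  proof (intro exI[of _ d] conjI allI impI ballI)
    fix w assume w: "w \<in> UNIV" "w \<noteq> z \<and> dist w z < d"
    then have dp: "dist z w > 0" by auto
    have "max (f z - f w) 0 \<le> c * dist z w"
      using assms w dp by (auto simp: dist_commute)
    then have "max (f z - f w) 0 / dist z w \<le> c"
      using dp by (simp add: divide_le_eq)
    then show "ereal (max (f z - f w) 0 / dist z w) \<le> ereal c" by simp
  qed (use assms in auto)
  then have "Limsup (at z) (\<lambda>w. ereal (max (f z - f w) 0 / dist z w)) \<le> ereal c"
    by (rule Limsup_bounded)
  with False show ?thesis by (simp add: local_slope_def)
qed

lemma slope_ge: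
  assumes "local_slope f p = ereal s0" "e > 0"
  shows "\<exists>d>0. \<forall>w. dist w p < d \<longrightarrow> f p - f w \<le> (s0 + e) * dist p w"
proof -
  have ev: "\<forall>\<^sub>F w in at p. ereal (max (f p - f w) 0 / dist p w) < ereal (s0 + e)"
  proof (cases "at p = bot")
    case True then show ?thesis by simp
  next
    case False
    then have "Limsup (at p) (\<lambda>w. ereal (max (f p - f w) 0 / dist p w)) < ereal (s0 + e)"
      using assms by (simp add: local_slope_def)
    then show ?thesis by (rule Limsup_lessD)
  qed
  then obtain d where d: "d > 0" "\<And>w. w \<noteq> p \<Longrightarrow> dist w p < d \<Longrightarrow>
      max (f p - f w) 0 / dist p w < s0 + e"
    unfolding eventually_at by auto
  show ?thesis
  proof (intro exI[of _ d] conjI allI impI)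
    fix w assume w: "dist w p < d"
    show "f p - f w \<le> (s0 + e) * dist p w"
    proof (cases "w = p")
      case True then show ?thesis by simp
    next
      case False
      then have dp: "dist p w > 0" by simp
      have "max (f p - f w) 0 / dist p w < s0 + e" using d(2)[OF False w] .
      then have "max (f p - f w) 0 < (s0 + e) * dist p w"
        using dp by (simp add: divide_less_eq)
      then show ?thesis by linarith
    qed
  qed (use d in auto)
qed

lemma mono_local:
  fixes \<psi> :: "real \<Rightarrow> real"
  assumes ab: "a \<le> b" and cont: "continuous_on {a..b} \<psi>"
    and loc: "\<forall>c\<in>{a..<b}. \<exists>d>0. \<forall>t. c < t \<and> t < c + d \<and> t \<le> b \<longrightarrow> \<psi> c \<le> \<psi> t"
  shows "\<psi> a \<le> \<psi> b"
proof -
  define S where "S = {t \<in> {a..b}. \<psi> a \<le> \<psi> t}"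
  have "S = {a..b} \<inter> \<psi> -` {\<psi> a..}" by (auto simp: S_def)
  then have cl: "closed S"
    using continuous_closed_preimage[OF cont closed_atLeastAtMost closed_atLeast] by simp
  have "a \<in> S" using ab by (simp add: S_def)
  have bdd: "bdd_above S" unfolding S_def by (auto intro: bdd_aboveI[of _ b])
  define c where "c = Sup S"
  have cS: "c \<in> S" unfolding c_def using closed_contains_Sup[OF _ bdd cl] \<open>a \<in> S\<close> by auto
  have "c = b"
  proof (rule ccontr)
    assume "c \<noteq> b"
    with cS have "c \<in> {a..<b}" by (auto simp: S_def)
    with loc obtain d where d: "d > 0" "\<forall>t. c < t \<and> t < c + d \<and> t \<le> b \<longrightarrow> \<psi> c \<le> \<psi> t" by blast
    define t where "t = min (c + d/2) b"
    have "c < t" using d \<open>c \<in> {a..<b}\<close> by (auto simp: t_def)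
    have "\<psi> c \<le> \<psi> t" using d \<open>c < t\<close> by (auto simp: t_def)
    then have "t \<in> S" using cS \<open>c < t\<close> by (auto simp: S_def t_def)
    then have "t \<le> c" unfolding c_def using bdd by (rule cSup_upper)
    with \<open>c < t\<close> show False by simp
  qed
  with cS show ?thesis by (simp add: S_def)
qed

lemma int_bounds:
  fixes \<phi> :: "real \<Rightarrow> real"
  assumes cu: "c \<le> u" and cont: "continuous_on {c..u} \<phi>"
    and bd: "\<forall>v\<in>{c..u}. \<bar>\<phi> v - \<phi> c\<bar> \<le> e"
  shows "(u - c) * (\<phi> c - e) \<le> integral {c..u} \<phi> \<and> integral {c..u} \<phi> \<le> (u - c) * (\<phi> c + e)"
proof -
  have int: "\<phi> integrable_on {c..u}" by (rule integrable_continuous_interval[OF cont])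
  have pw: "\<phi> c - e \<le> \<phi> v \<and> \<phi> v \<le> \<phi> c + e" if "v \<in> {c..u}" for v
  proof -
    have "\<bar>\<phi> v - \<phi> c\<bar> \<le> e" using bd that by blast
    then show ?thesis by (auto simp: abs_le_iff)
  qed
  have "integral {c..u} (\<lambda>v. \<phi> c - e) \<le> integral {c..u} \<phi>"
    by (rule integral_le) (use int pw in auto)
  moreover have "integral {c..u} \<phi> \<le> integral {c..u} (\<lambda>v. \<phi> c + e)"
    by (rule integral_le) (use int pw in auto)
  ultimately show ?thesis using cu by simp
qed

lemma integral_char:
  fixes g \<phi> :: "real \<Rightarrow> real"
  assumes T: "0 \<le> T" and cg: "continuous_on {0..T} g" and cp: "continuous_on {0..T} \<phi>"
    and U: "\<And>a e. a \<in> {0..<T} \<Longrightarrow> e > 0 \<Longrightarrow>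
       \<exists>d>0. \<forall>b. a < b \<and> b < a + d \<and> b \<le> T \<longrightarrow> g b \<le> g a - (b - a) * (\<phi> a - e)"
    and L: "\<And>a e. a \<in> {0..<T} \<Longrightarrow> e > 0 \<Longrightarrow>
       \<exists>d>0. \<forall>b. a < b \<and> b < a + d \<and> b \<le> T \<longrightarrow> g a - (b - a) * (\<phi> a + e) \<le> g b"
    and t: "t \<in> {0..T}"
  shows "g t = g 0 - integral {0..t} \<phi>"
proof -
  define H where "H u = g u + integral {0..u} \<phi>" for u
  have intT: "\<phi> integrable_on {0..T}" by (rule integrable_continuous_interval[OF cp])
  have cH: "continuous_on {0..t} H"
  proof -
    have "continuous_on {0..T} (\<lambda>u. integral {0..u} \<phi>)"
      by (rule indefinite_integral_continuous_1[OF intT])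
    then have "continuous_on {0..t} (\<lambda>u. integral {0..u} \<phi>)"
      by (rule continuous_on_subset) (use t in auto)
    moreover have "continuous_on {0..t} g"
      by (rule continuous_on_subset[OF cg]) (use t in auto)
    ultimately show ?thesis unfolding H_def by (intro continuous_on_add)
  qed
  have incr: "H u - H c = g u - g c + integral {c..u} \<phi>" if "0 \<le> c" "c \<le> u" "u \<le> T" for c u
  proof -
    have "\<phi> integrable_on {0..u}" using that by (intro integrable_on_subinterval[OF intT]) auto
    then have "integral {0..c} \<phi> + integral {c..u} \<phi> = integral {0..u} \<phi>"
      using that by (intro Henstock_Kurzweil_Integration.integral_combine) auto
    then show ?thesis unfolding H_def by simp
  qed
  have phic: "\<exists>d>0. \<forall>u. c \<le> u \<and> u < c + d \<and> u \<le> T \<longrightarrow>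
      (u - c) * (\<phi> c - e) \<le> integral {c..u} \<phi> \<and> integral {c..u} \<phi> \<le> (u - c) * (\<phi> c + e)"
    if "c \<in> {0..<T}" "e > 0" for c e
  proof -
    have cin: "c \<in> {0..T}" using that by auto
    obtain d where d: "d > 0" "\<forall>v\<in>{0..T}. dist v c < d \<longrightarrow> dist (\<phi> v) (\<phi> c) < e"
      using cp cin \<open>e > 0\<close> unfolding continuous_on_iff by blast
    show ?thesis
    proof (intro exI[of _ d] conjI allI impI)
      fix u assume u: "c \<le> u \<and> u < c + d \<and> u \<le> T"
      have "\<forall>v\<in>{c..u}. \<bar>\<phi> v - \<phi> c\<bar> \<le> e"
      proof
        fix v assume v: "v \<in> {c..u}"
        then have "v \<in> {0..T}" "dist v c < d" using u that by (auto simp: dist_real_def)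
        then have "dist (\<phi> v) (\<phi> c) < e" using d(2) by blast
        then show "\<bar>\<phi> v - \<phi> c\<bar> \<le> e" by (simp add: dist_real_def)
      qed
      moreover have "continuous_on {c..u} \<phi>" using u that by (intro continuous_on_subset[OF cp]) auto
      ultimately show "(u - c) * (\<phi> c - e) \<le> integral {c..u} \<phi>"
        "integral {c..u} \<phi> \<le> (u - c) * (\<phi> c + e)"
        using int_bounds[of c u \<phi> e] u by auto
    qed (use d in auto)
  qed
  have main: "H 0 \<le> H t + \<epsilon> * t \<and> H t \<le> H 0 + \<epsilon> * t" if eps: "\<epsilon> > 0" for \<epsilon>
  proof
    have "(\<lambda>u. H u + \<epsilon> * u) 0 \<le> (\<lambda>u. H u + \<epsilon> * u) t"
    proof (rule mono_local[where \<psi>="\<lambda>u. H u + \<epsilon> * u"])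
      show "0 \<le> t" using t by simp
      show "continuous_on {0..t} (\<lambda>u. H u + \<epsilon> * u)"
        by (intro continuous_on_add cH continuous_intros)
      show "\<forall>c\<in>{0..<t}. \<exists>d>0. \<forall>u. c < u \<and> u < c + d \<and> u \<le> t \<longrightarrow> H c + \<epsilon> * c \<le> H u + \<epsilon> * u"
      proof
        fix c assume c: "c \<in> {0..<t}"
        then have cT: "c \<in> {0..<T}" using t by auto
        obtain d1 where d1: "d1 > 0" "\<forall>b. c < b \<and> b < c + d1 \<and> b \<le> T \<longrightarrow> g c - (b - c) * (\<phi> c + \<epsilon>/2) \<le> g b"
          using L[OF cT, of "\<epsilon>/2"] eps by auto
        obtain d2 where d2: "d2 > 0" "\<forall>u. c \<le> u \<and> u < c + d2 \<and> u \<le> T \<longrightarrow>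
            (u - c) * (\<phi> c - \<epsilon>/2) \<le> integral {c..u} \<phi>"
          using phic[OF cT, of "\<epsilon>/2"] eps by auto
        show "\<exists>d>0. \<forall>u. c < u \<and> u < c + d \<and> u \<le> t \<longrightarrow> H c + \<epsilon> * c \<le> H u + \<epsilon> * u"
        proof (intro exI[of _ "min d1 d2"] conjI allI impI)
          fix u assume u: "c < u \<and> u < c + min d1 d2 \<and> u \<le> t"
          have "u \<le> T" using u t by auto
          have "H u - H c = g u - g c + integral {c..u} \<phi>" using incr[of c u] u c \<open>u \<le> T\<close> by auto
          moreover have "g c - (u - c) * (\<phi> c + \<epsilon>/2) \<le> g u" using d1 u \<open>u \<le> T\<close> by auto
          moreover have "(u - c) * (\<phi> c - \<epsilon>/2) \<le> integral {c..u} \<phi>" using d2 u \<open>u \<le> T\<close> by auto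
          ultimately have "H u - H c \<ge> (u - c) * (\<phi> c - \<epsilon>/2) - (u - c) * (\<phi> c + \<epsilon>/2)" by linarith
          also have "(u - c) * (\<phi> c - \<epsilon>/2) - (u - c) * (\<phi> c + \<epsilon>/2) = - \<epsilon> * (u - c)"
            by (simp add: algebra_simps)
          finally show "H c + \<epsilon> * c \<le> H u + \<epsilon> * u" by (simp add: algebra_simps)
        qed (use d1 d2 in auto)
      qed
    qed
    then show "H 0 \<le> H t + \<epsilon> * t" by simp
  next
    have "(\<lambda>u. - H u + \<epsilon> * u) 0 \<le> (\<lambda>u. - H u + \<epsilon> * u) t"
    proof (rule mono_local[where \<psi>="\<lambda>u. - H u + \<epsilon> * u"])
      show "0 \<le> t" using t by simp
      show "continuous_on {0..t} (\<lambda>u. - H u + \<epsilon> * u)"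
        by (intro continuous_on_add continuous_on_minus cH continuous_intros)
      show "\<forall>c\<in>{0..<t}. \<exists>d>0. \<forall>u. c < u \<and> u < c + d \<and> u \<le> t \<longrightarrow> - H c + \<epsilon> * c \<le> - H u + \<epsilon> * u"
      proof
        fix c assume c: "c \<in> {0..<t}"
        then have cT: "c \<in> {0..<T}" using t by auto
        obtain d1 where d1: "d1 > 0" "\<forall>b. c < b \<and> b < c + d1 \<and> b \<le> T \<longrightarrow> g b \<le> g c - (b - c) * (\<phi> c - \<epsilon>/2)"
          using U[OF cT, of "\<epsilon>/2"] eps by auto
        obtain d2 where d2: "d2 > 0" "\<forall>u. c \<le> u \<and> u < c + d2 \<and> u \<le> T \<longrightarrow>
            integral {c..u} \<phi> \<le> (u - c) * (\<phi> c + \<epsilon>/2)"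
          using phic[OF cT, of "\<epsilon>/2"] eps by auto
        show "\<exists>d>0. \<forall>u. c < u \<and> u < c + d \<and> u \<le> t \<longrightarrow> - H c + \<epsilon> * c \<le> - H u + \<epsilon> * u"
        proof (intro exI[of _ "min d1 d2"] conjI allI impI)
          fix u assume u: "c < u \<and> u < c + min d1 d2 \<and> u \<le> t"
          have "u \<le> T" using u t by auto
          have "H u - H c = g u - g c + integral {c..u} \<phi>" using incr[of c u] u c \<open>u \<le> T\<close> by auto
          moreover have "g u \<le> g c - (u - c) * (\<phi> c - \<epsilon>/2)" using d1 u \<open>u \<le> T\<close> by auto
          moreover have "integral {c..u} \<phi> \<le> (u - c) * (\<phi> c + \<epsilon>/2)" using d2 u \<open>u \<le> T\<close> by auto
          ultimately have "H u - H c \<le> (u - c) * (\<phi> c + \<epsilon>/2) - (u - c) * (\<phi> c - \<epsilon>/2)" by linarith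
          also have "(u - c) * (\<phi> c + \<epsilon>/2) - (u - c) * (\<phi> c - \<epsilon>/2) = \<epsilon> * (u - c)"
            by (simp add: algebra_simps)
          finally show "- H c + \<epsilon> * c \<le> - H u + \<epsilon> * u" by (simp add: algebra_simps)
        qed (use d1 d2 in auto)
      qed
    qed
    then show "H t \<le> H 0 + \<epsilon> * t" by simp
  qed
  have "H t = H 0"
  proof (rule ccontr)
    assume ne: "H t \<noteq> H 0"
    define \<epsilon> where "\<epsilon> = \<bar>H t - H 0\<bar> / (2 * (t + 1))"
    have tp: "t + 1 > 0" using t by simp
    have ep: "\<epsilon> > 0" using ne tp by (simp add: \<epsilon>_def)
    have "\<epsilon> * t < \<bar>H t - H 0\<bar>"
    proof -
      have "\<epsilon> * t \<le> \<epsilon> * (t + 1)" using ep by simp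
      also have "\<epsilon> * (t + 1) = \<bar>H t - H 0\<bar> / 2" using tp by (simp add: \<epsilon>_def field_simps)
      also have "\<dots> < \<bar>H t - H 0\<bar>" using ne by simp
      finally show ?thesis .
    qed
    with main[OF ep] show False by linarith
  qed
  moreover have "H 0 = g 0" by (simp add: H_def)
  ultimately show ?thesis by (simp add: H_def)
qed



lemma slope_real:
  assumes "local_slope f y < \<infinity>"
  shows "local_slope f y = ereal (real_of_ereal (local_slope f y))"
  using slope_nonneg[of f y] assms by (cases "local_slope f y") auto

lemma slope_real_nonneg: "0 \<le> real_of_ereal (local_slope f y)"
  using slope_nonneg[of f y] by (simp add: real_of_ereal_pos)

lemma decrease:
  fixes f :: "'a::metric_space \<Rightarrow> real"
  assumes proper: "\<And>S::'a set. bounded S \<Longrightarrow> closed S \<Longrightarrow> compact S"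
    and fc: "continuous_on UNIV f"
    and c: "c > 0" and h: "h > 0"
    and big: "\<And>w. dist p w < h \<Longrightarrow> ereal c < local_slope f w"
  shows "\<exists>y. dist p y \<le> h \<and> f y \<le> f p - c * h"
proof -
  define K where "K = cball p h"
  have cK: "compact K" unfolding K_def by (rule proper) auto
  define \<phi> where "\<phi> w = f w + c * dist p w" for w
  have "continuous_on K \<phi>" unfolding \<phi>_def
    by (intro continuous_on_add continuous_on_subset[OF fc] continuous_intros) auto
  moreover have "K \<noteq> {}" using h by (auto simp: K_def)
  ultimately obtain z where z: "z \<in> K" "\<And>w. w \<in> K \<Longrightarrow> \<phi> z \<le> \<phi> w"
    using continuous_attains_inf[OF cK] by blast
  show ?thesis
  proof (cases "dist p z < h")
    case True
    define r where "r = h - dist p z"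
    have r: "r > 0" using True by (simp add: r_def)
    have "\<forall>w. dist w z < r \<longrightarrow> f z - f w \<le> c * dist z w"
    proof (intro allI impI)
      fix w assume w: "dist w z < r"
      have "dist p w \<le> dist p z + dist z w" by (rule dist_triangle)
      then have "w \<in> K" using w by (auto simp: K_def r_def dist_commute)
      then have "\<phi> z \<le> \<phi> w" by (rule z(2))
      then have "f z + c * dist p z \<le> f w + c * dist p w" by (simp add: \<phi>_def)
      moreover have "c * dist p w \<le> c * (dist p z + dist z w)"
        using \<open>dist p w \<le> dist p z + dist z w\<close> c by (intro mult_left_mono) auto
      ultimately show "f z - f w \<le> c * dist z w" by (simp add: algebra_simps)
    qed
    then have "local_slope f z \<le> ereal c" using c r by (intro slope_le) auto
    with big[OF True] show ?thesis by simp
  next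
    case False
    then have dz: "dist p z = h" using z(1) by (auto simp: K_def)
    have "p \<in> K" using h by (simp add: K_def)
    then have "\<phi> z \<le> \<phi> p" by (rule z(2))
    then have "f z + c * h \<le> f p" by (simp add: \<phi>_def dz)
    then show ?thesis using dz by (intro exI[of _ z]) auto
  qed
qed

lemma step:
  fixes f :: "'a::metric_space \<Rightarrow> real"
  assumes proper: "\<And>S::'a set. bounded S \<Longrightarrow> closed S \<Longrightarrow> compact S"
    and fc: "continuous_on UNIV f"
    and fin: "\<And>y. local_slope f y < \<infinity>"
    and sc: "continuous_on UNIV (\<lambda>y. real_of_ereal (local_slope f y))"
    and e: "e > 0"
  shows "\<exists>\<rho>>0. \<forall>p\<in>cball x (1/2). \<forall>h. 0 < h \<and> h < \<rho> \<longrightarrow>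
           (\<exists>y. dist p y \<le> h \<and> f y \<le> f p - h * (real_of_ereal (local_slope f p) - e))"
proof -
  define sr where "sr = (\<lambda>y. real_of_ereal (local_slope f y))"
  have cK: "compact (cball x 1)" by (rule proper) auto
  have "uniformly_continuous_on (cball x 1) sr"
    using compact_uniformly_continuous[OF continuous_on_subset[OF sc] cK] by (simp add: sr_def)
  then obtain d where d: "d > 0" "\<And>p q. p \<in> cball x 1 \<Longrightarrow> q \<in> cball x 1 \<Longrightarrow> dist q p < d \<Longrightarrow>
      dist (sr q) (sr p) < e/2"
    unfolding uniformly_continuous_on_def using e by (metis half_gt_zero)
  show ?thesis
  proof (intro exI[of _ "min d (1/2)"] conjI ballI allI impI)
    show "0 < min d (1/2)" using d by simp
    fix p h assume p: "p \<in> cball x (1/2)" and h: "0 < h \<and> h < min d (1/2)"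
    show "\<exists>y. dist p y \<le> h \<and> f y \<le> f p - h * (real_of_ereal (local_slope f p) - e)"
    proof (cases "sr p - e \<le> 0")
      case True
      have "0 \<le> - h * (sr p - e)" using True h by (simp add: mult_nonneg_nonpos)
      then show ?thesis using h by (intro exI[of _ p]) (auto simp: sr_def)
    next
      case False
      have "\<exists>y. dist p y \<le> h \<and> f y \<le> f p - (sr p - e) * h"
      proof (rule decrease[OF proper fc])
        show "sr p - e > 0" using False by simp
        show "h > 0" using h by simp
        fix w assume w: "dist p w < h"
        have pK: "p \<in> cball x 1" using p by auto
        have "dist x w \<le> dist x p + dist p w" by (rule dist_triangle)
        then have wK: "w \<in> cball x 1" using p w h by auto
        have "dist w p < d" using w h by (simp add: dist_commute)
        then have "dist (sr w) (sr p) < e/2" using d(2)[OF pK wK] by simp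
        then have "sr w > sr p - e" using e unfolding dist_real_def by linarith
        then show "ereal (sr p - e) < local_slope f w"
          using slope_real[OF fin, of w] by (simp add: sr_def) (metis ereal_less_eq(3) less_ereal.simps(1))
      qed
      then show ?thesis by (simp add: sr_def mult.commute)
    qed
  qed
qed



theorem corollary3p6:
  fixes f :: "'a::metric_space \<Rightarrow> real" and x :: 'a
  assumes proper: "\<And>S :: 'a set. bounded S \<Longrightarrow> closed S \<Longrightarrow> compact S"
    and f_cont: "continuous_on UNIV f"
    and slope_finite: "\<And>y. local_slope f y < \<infinity>"
    and slope_cont: "continuous_on UNIV (\<lambda>y. real_of_ereal (local_slope f y))"
    and nz: "local_slope f x \<noteq> 0"
  shows "\<exists>T>0. \<exists>\<gamma> :: real \<Rightarrow> 'a.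
           \<gamma> 0 = x \<and>
           (\<forall>s\<in>{0..T}. \<forall>t\<in>{0..T}. dist (\<gamma> s) (\<gamma> t) \<le> \<bar>s - t\<bar>) \<and>
           (\<forall>t\<in>{0..T}. f (\<gamma> t) = f x - integral {0..t} (\<lambda>s. real_of_ereal (local_slope f (\<gamma> s))))"
proof -
  define sr where "sr = (\<lambda>y. real_of_ereal (local_slope f y))"
  have sc: "continuous_on UNIV sr" using slope_cont by (simp add: sr_def)
  have sr0: "\<And>y. 0 \<le> sr y" by (simp add: sr_def slope_real_nonneg)
  define K where "K = cball x 1"
  have cK: "compact K" unfolding K_def by (rule proper) auto
  have cK2: "compact (cball x (1/2))" by (rule proper) auto
  have "K \<noteq> {}" by (simp add: K_def)
  then obtain m where "m \<in> K" "\<And>y. y \<in> K \<Longrightarrow> sr y \<le> sr m"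
    using continuous_attains_sup[OF cK _ continuous_on_subset[OF sc]] by blast
  then obtain M where M: "\<And>y. y \<in> K \<Longrightarrow> sr y \<le> M" by blast
  have M0: "0 \<le> M" using M[of x] sr0[of x] by (simp add: K_def)
  have "\<forall>e. \<exists>\<rho>. e > 0 \<longrightarrow> \<rho> > 0 \<and> (\<forall>p\<in>cball x (1/2). \<forall>h. 0 < h \<and> h < \<rho> \<longrightarrow>
           (\<exists>y. dist p y \<le> h \<and> f y \<le> f p - h * (sr p - e)))"
    using step[OF proper f_cont slope_finite slope_cont] unfolding sr_def by blast
  then obtain \<rho> where \<rho>: "\<And>e. e > 0 \<Longrightarrow> \<rho> e > 0"
    "\<And>e p h. e > 0 \<Longrightarrow> p \<in> cball x (1/2) \<Longrightarrow> 0 < h \<Longrightarrow> h < \<rho> e \<Longrightarrow>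
           (\<exists>y. dist p y \<le> h \<and> f y \<le> f p - h * (sr p - e))"
    by metis
  define en where "en n = inverse (real (Suc n))" for n
  define hn where "hn n = min (\<rho> (en n) / 2) (inverse (real (Suc n)))" for n
  have en_pos: "en n > 0" for n by (simp add: en_def)
  have hn_pos: "hn n > 0" for n using \<rho>(1)[OF en_pos[of n]] by (simp add: hn_def)
  have hn_le: "hn n \<le> inverse (real (Suc n))" for n by (simp add: hn_def)
  have hn_rho: "hn n < \<rho> (en n)" for n using \<rho>(1)[OF en_pos[of n]] by (simp add: hn_def)
  define nxt where "nxt n p = (if p \<in> cball x (1/2) then
      (SOME y. dist p y \<le> hn n \<and> f y \<le> f p - hn n * (sr p - en n)) else p)" for n p
  have nxt_prop: "dist p (nxt n p) \<le> hn n \<and> f (nxt n p) \<le> f p - hn n * (sr p - en n)"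
    if "p \<in> cball x (1/2)" for n p
  proof -
    have "\<exists>y. dist p y \<le> hn n \<and> f y \<le> f p - hn n * (sr p - en n)"
      using \<rho>(2)[OF en_pos that hn_pos hn_rho] .
    then have "dist p (SOME y. dist p y \<le> hn n \<and> f y \<le> f p - hn n * (sr p - en n)) \<le> hn n \<and>
        f (SOME y. dist p y \<le> hn n \<and> f y \<le> f p - hn n * (sr p - en n)) \<le> f p - hn n * (sr p - en n)"
      by (rule someI_ex)
    then show ?thesis unfolding nxt_def using that by simp
  qed
  have nxt_dist: "dist p (nxt n p) \<le> hn n" for n p
    using nxt_prop[of p n] hn_pos[of n] by (cases "p \<in> cball x (1/2)") (auto simp: nxt_def)
  define Y where "Y n k = (nxt n ^^ k) x" for n k
  have Y0: "Y n 0 = x" for n by (simp add: Y_def)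
  have YS: "Y n (Suc k) = nxt n (Y n k)" for n k by (simp add: Y_def)
  have Ydist': "dist (Y n i) (Y n (i + d)) \<le> real d * hn n" for n i d
  proof (induction d)
    case 0 then show ?case by simp
  next
    case (Suc d)
    have "dist (Y n i) (Y n (i + Suc d)) \<le> dist (Y n i) (Y n (i + d)) + dist (Y n (i + d)) (Y n (i + Suc d))"
      by (rule dist_triangle)
    also have "dist (Y n (i + d)) (Y n (i + Suc d)) \<le> hn n" using nxt_dist by (simp add: YS)
    finally show ?case using Suc by (simp add: algebra_simps)
  qed
  have Ydist: "dist (Y n i) (Y n j) \<le> (real j - real i) * hn n" if "i \<le> j" for n i j
    using Ydist'[of n i "j - i"] that by (simp add: of_nat_diff)
  have Yx: "dist x (Y n k) \<le> real k * hn n" for n k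
    using Ydist[of 0 k n] by (simp add: Y0)
  have Ystep: "f (Y n (Suc k)) \<le> f (Y n k) - hn n * (sr (Y n k) - en n)" if "real k * hn n \<le> 1/2" for n k
  proof -
    have "Y n k \<in> cball x (1/2)" using Yx[of n k] that by simp
    then show ?thesis using nxt_prop by (simp add: YS)
  qed
  define cl where "cl t = max 0 (min (1/2) t)" for t :: real
  have cl_id: "t \<in> {0..1/2} \<Longrightarrow> cl t = t" for t by (auto simp: cl_def)
  have cl_rng: "0 \<le> cl t" "cl t \<le> 1/2" for t by (auto simp: cl_def)
  have cl_lip: "\<bar>cl s - cl t\<bar> \<le> \<bar>s - t\<bar>" for s t by (simp add: cl_def max_def min_def abs_if)
  have cl_mono: "s \<le> t \<Longrightarrow> cl s \<le> cl t" for s t by (simp add: cl_def max_def min_def)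
  define idx where "idx n t = nat \<lfloor>cl t / hn n\<rfloor>" for n t
  have idx_bd: "real (idx n t) * hn n \<le> cl t \<and> cl t < (real (idx n t) + 1) * hn n" for n t
  proof -
    have h: "hn n > 0" by (rule hn_pos)
    have nn: "0 \<le> cl t / hn n" using cl_rng h by simp
    then have e: "real (idx n t) = of_int \<lfloor>cl t / hn n\<rfloor>" by (simp add: idx_def)
    have a: "of_int \<lfloor>cl t / hn n\<rfloor> \<le> cl t / hn n" "cl t / hn n < of_int \<lfloor>cl t / hn n\<rfloor> + 1"
      by linarith+
    have "of_int \<lfloor>cl t / hn n\<rfloor> * hn n \<le> cl t" using a(1) h by (simp only: pos_le_divide_eq)
    moreover have "cl t < (of_int \<lfloor>cl t / hn n\<rfloor> + 1) * hn n" using a(2) h by (simp only: pos_divide_less_eq)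
    ultimately show ?thesis unfolding e by simp
  qed
  have idx_mono: "s \<le> t \<Longrightarrow> idx n s \<le> idx n t" for n s t
    unfolding idx_def using hn_pos[of n] cl_mono[of s t]
    by (intro nat_mono floor_mono divide_right_mono) auto
  define G where "G n t = Y n (idx n t)" for n t
  have G0: "G n 0 = x" for n by (simp add: G_def idx_def cl_def Y0)
  have G_in: "G n t \<in> cball x (1/2)" for n t
    using Yx[of n "idx n t"] idx_bd[of n t] cl_rng[of t] by (simp add: G_def)
  have G_lip: "dist (G n s) (G n t) \<le> \<bar>cl s - cl t\<bar> + hn n" for n s t
  proof -
    have gen: "dist (G n s) (G n t) \<le> \<bar>cl s - cl t\<bar> + hn n" if st: "s \<le> t" for s t
    proof -
      have "dist (G n s) (G n t) \<le> (real (idx n t) - real (idx n s)) * hn n"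
        unfolding G_def by (rule Ydist[OF idx_mono[OF st]])
      also have "\<dots> = real (idx n t) * hn n - real (idx n s) * hn n" by (simp add: algebra_simps)
      also have "\<dots> \<le> \<bar>cl s - cl t\<bar> + hn n" using idx_bd[of n s] idx_bd[of n t] by (simp add: algebra_simps) linarith
      finally show ?thesis .
    qed
    show ?thesis
    proof (cases "s \<le> t")
      case True then show ?thesis by (rule gen)
    next
      case False
      then have "dist (G n t) (G n s) \<le> \<bar>cl t - cl s\<bar> + hn n" by (intro gen) auto
      then show ?thesis by (simp add: dist_commute abs_minus_commute)
    qed
  qed
  have ucK: "uniformly_continuous_on K sr"
    by (rule compact_uniformly_continuous[OF continuous_on_subset[OF sc] cK]) simp
  have Un: "\<exists>\<delta>>0. \<exists>N. \<forall>n\<ge>N. \<forall>a b. 0 \<le> a \<and> a \<le> b \<and> b \<le> 1/2 \<and> b - a < \<delta> \<longrightarrow>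
      f (G n b) \<le> f (G n a) - (b - a) * (sr (G n a) - e) + hn n * (M + e)" if e: "e > 0" for e
  proof -
    obtain du where du: "du > 0" "\<And>p q. p \<in> K \<Longrightarrow> q \<in> K \<Longrightarrow> dist q p < du \<Longrightarrow> dist (sr q) (sr p) < e/2"
      using ucK e unfolding uniformly_continuous_on_def by (metis half_gt_zero)
    obtain N where N: "inverse (real (Suc N)) < min (e/2) (du/2)"
      using reals_Archimedean[of "min (e/2) (du/2)"] e du by auto
    show ?thesis
    proof (intro exI[of _ "du/2"] exI[of _ N] conjI allI impI)
      show "du/2 > 0" using du by simp
      fix n a b assume nN: "N \<le> n" and ab: "0 \<le> a \<and> a \<le> b \<and> b \<le> 1/2 \<and> b - a < du/2"
      define h where "h = hn n"
      have hp: "h > 0" by (simp add: h_def hn_pos)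
      have iv: "inverse (real (Suc n)) \<le> inverse (real (Suc N))" using nN by (simp add: field_simps)
      have N2: "inverse (real (Suc N)) < e/2" "inverse (real (Suc N)) < du/2" using N by auto
      have hs: "h < du/2" using iv N2 hn_le[of n] unfolding h_def by linarith
      have es: "en n < e/2" using iv N2 unfolding en_def by linarith
      define i where "i = idx n a"
      define j where "j = idx n b"
      have ij: "i \<le> j" unfolding i_def j_def using ab by (intro idx_mono) auto
      have bi: "real i * h \<le> a" "a < (real i + 1) * h"
        using idx_bd[of n a] cl_id[of a] ab by (auto simp: i_def h_def)
      have bj: "real j * h \<le> b" "b < (real j + 1) * h"
        using idx_bd[of n b] cl_id[of b] ab by (auto simp: j_def h_def)
      define q where "q = sr (Y n i) - e"
      have YK: "Y n k \<in> K" if "real k * h \<le> 1/2" for k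
        using Yx[of n k] that by (simp add: K_def h_def)
      have claim: "i + d \<le> j \<longrightarrow> f (Y n (i + d)) \<le> f (Y n i) - real d * h * q" for d
      proof (induction d)
        case 0 then show ?case by simp
      next
        case (Suc d)
        show ?case
        proof
          assume le: "i + Suc d \<le> j"
          define k where "k = i + d"
          have kh: "real k * h \<le> 1/2"
          proof -
            have "real k * h \<le> real j * h" using le hp by (simp add: k_def)
            then show ?thesis using bj ab by linarith
          qed
          have ih: "f (Y n k) \<le> f (Y n i) - real d * h * q" using Suc le by (simp add: k_def)
          have st: "f (Y n (Suc k)) \<le> f (Y n k) - h * (sr (Y n k) - en n)"
            using Ystep[of k n] kh by (simp add: h_def)
          have "dist (Y n i) (Y n k) \<le> (real k - real i) * h" using Ydist[of i k n] by (simp add: k_def h_def)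
          also have "\<dots> \<le> (real j - real i) * h" using le hp by (simp add: k_def)
          also have "\<dots> < du" using bi bj hs ab by (simp add: algebra_simps)
          finally have "dist (Y n k) (Y n i) < du" by (simp add: dist_commute)
          moreover have "real i * h \<le> 1/2" using bi ab by linarith
          ultimately have "dist (sr (Y n k)) (sr (Y n i)) < e/2" using du(2) YK kh by blast
          then have "sr (Y n k) - en n \<ge> q" using es unfolding dist_real_def q_def by linarith
          then have "h * (sr (Y n k) - en n) \<ge> h * q" using hp by (intro mult_left_mono) auto
          then have "f (Y n (Suc k)) \<le> f (Y n i) - real d * h * q - h * q" using st ih by linarith
          then show "f (Y n (i + Suc d)) \<le> f (Y n i) - real (Suc d) * h * q"
            by (simp add: k_def algebra_simps)
        qed
      qed
      define D where "D = (real j - real i) * h"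
      have fD: "f (Y n j) \<le> f (Y n i) - D * q"
        using claim[of "j - i"] ij by (simp add: D_def of_nat_diff)
      have D1: "b - a - h \<le> D" "D \<le> b - a + h" using bi bj by (simp_all add: D_def algebra_simps)
      have qM: "q \<le> M" "- e \<le> q"
        using M[OF YK[of i]] sr0[of "Y n i"] bi ab e by (auto simp: q_def)
      have Dq: "D * q \<ge> (b - a) * q - h * (M + e)"
      proof (cases "q \<ge> 0")
        case True
        have "D * q \<ge> (b - a - h) * q" using D1 True by (intro mult_right_mono) auto
        moreover have "h * q \<le> h * M" using qM hp by (intro mult_left_mono) auto
        moreover have "h * e \<ge> 0" using hp e by simp
        ultimately show ?thesis by (simp add: algebra_simps)
      next
        case False
        have "D * q \<ge> (b - a + h) * q" using D1 False by (intro mult_right_mono_neg) auto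
        moreover have "h * q \<ge> h * (- e)" using qM hp by (intro mult_left_mono) auto
        moreover have "h * M \<ge> 0" using hp M0 by simp
        ultimately show ?thesis by (simp add: algebra_simps)
      qed
      show "f (G n b) \<le> f (G n a) - (b - a) * (sr (G n a) - e) + hn n * (M + e)"
        using fD Dq by (simp add: G_def i_def[symmetric] j_def[symmetric] q_def h_def[symmetric])
    qed
  qed
  have sq: "seq_compact (cball x (1/2))" by (rule compact_imp_seq_compact[OF cK2])
  define \<sigma> where "\<sigma> = from_nat_into (\<rat> :: real set)"
  have range_\<sigma>: "range \<sigma> = \<rat>" unfolding \<sigma>_def
    by (rule range_from_nat_into) (auto simp: countable_rat)
  define \<tau> where "\<tau> i = cl (\<sigma> i)" for i
  define P where "P i r = (\<exists>l. (\<lambda>n. G (r n) (\<tau> i)) \<longlonglongrightarrow> l)" for i and r :: "nat \<Rightarrow> nat"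
  obtain k where k: "strict_mono (k :: nat \<Rightarrow> nat)" "\<And>i. P i (id \<circ> k)"
  proof (rule subsequence_diagonalization_lemma[of P id])
    fix i and r :: "nat \<Rightarrow> nat"
    have "\<forall>n. (\<lambda>n. G (r n) (\<tau> i)) n \<in> cball x (1/2)" using G_in by simp
    then obtain l r' where "strict_mono (r' :: nat \<Rightarrow> nat)" "((\<lambda>n. G (r n) (\<tau> i)) \<circ> r') \<longlonglongrightarrow> l"
      using seq_compactE[OF sq] by metis
    then show "\<exists>k. strict_mono (k :: nat \<Rightarrow> nat) \<and> P i (r \<circ> k)"
      unfolding P_def by (intro exI[of _ r']) (auto simp: o_def)
  next
    fix i and r k1 k2 :: "nat \<Rightarrow> nat" and N
    assume P1: "P i (r \<circ> k1)" and kk: "\<And>j. N \<le> j \<Longrightarrow> \<exists>j'. j \<le> j' \<and> k2 j = k1 j'"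
    from P1 obtain l where l: "(\<lambda>n. G (r (k1 n)) (\<tau> i)) \<longlonglongrightarrow> l" by (auto simp: P_def)
    have "(\<lambda>n. G (r (k2 n)) (\<tau> i)) \<longlonglongrightarrow> l"
      unfolding lim_sequentially
    proof (intro allI impI)
      fix \<epsilon> :: real assume "\<epsilon> > 0"
      with l obtain M where M: "\<And>n. n \<ge> M \<Longrightarrow> dist (G (r (k1 n)) (\<tau> i)) l < \<epsilon>"
        unfolding lim_sequentially by blast
      show "\<exists>no. \<forall>n\<ge>no. dist (G (r (k2 n)) (\<tau> i)) l < \<epsilon>"
      proof (intro exI[of _ "max N M"] allI impI)
        fix n assume "max N M \<le> n"
        then obtain j' where "n \<le> j'" "k2 n = k1 j'" using kk[of n] by auto
        then show "dist (G (r (k2 n)) (\<tau> i)) l < \<epsilon>" using M[of j'] \<open>max N M \<le> n\<close> by auto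
      qed
    qed
    then show "P i (r \<circ> k2)" by (auto simp: P_def)
  qed auto
  have kn: "n \<le> k n" for n by (rule seq_suble[OF k(1)])
  have hk_le: "hn (k n) \<le> inverse (real (Suc n))" for n
  proof -
    have "inverse (real (Suc (k n))) \<le> inverse (real (Suc n))" using kn[of n] by (simp add: field_simps)
    then show ?thesis using hn_le[of "k n"] by linarith
  qed
  have hk0: "(\<lambda>n. hn (k n)) \<longlonglongrightarrow> 0"
  proof (rule tendsto_sandwich[of "\<lambda>_. 0" _ _ "\<lambda>n. inverse (real (Suc n))"])
    show "\<forall>\<^sub>F n in sequentially. 0 \<le> hn (k n)" using hn_pos by (simp add: less_imp_le)
    show "\<forall>\<^sub>F n in sequentially. hn (k n) \<le> inverse (real (Suc n))" using hk_le by simp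
    show "(\<lambda>n. inverse (real (Suc n))) \<longlonglongrightarrow> 0" by (rule LIMSEQ_inverse_real_of_nat)
  qed simp
  have conv: "\<exists>l. (\<lambda>n. G (k n) t) \<longlonglongrightarrow> l" if t: "t \<in> {0..1/2}" for t
  proof -
    have "Cauchy (\<lambda>n. G (k n) t)"
      unfolding Cauchy_def
    proof (intro allI impI)
      fix \<epsilon> :: real assume ep: "\<epsilon> > 0"
      obtain q where q: "q \<in> \<rat>" "t - \<epsilon>/5 < q" "q < t + \<epsilon>/5"
        using Rats_dense_in_real[of "t - \<epsilon>/5" "t + \<epsilon>/5"] ep by auto
      then obtain i where i: "\<sigma> i = q" using range_\<sigma> by (metis rangeE)
      have tq: "\<bar>cl t - cl (\<tau> i)\<bar> < \<epsilon>/5"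
      proof -
        have e1: "cl (\<tau> i) = cl q" unfolding \<tau>_def i using cl_id cl_rng by auto
        have e2: "\<bar>t - q\<bar> < \<epsilon>/5" using q(2,3) by linarith
        show ?thesis unfolding e1 using cl_lip[of t q] e2 by linarith
      qed
      from k(2)[of i] obtain l where "(\<lambda>n. G (k n) (\<tau> i)) \<longlonglongrightarrow> l" by (auto simp: P_def)
      then have "Cauchy (\<lambda>n. G (k n) (\<tau> i))" by (rule LIMSEQ_imp_Cauchy)
      then obtain M1 where M1: "\<And>m n. m \<ge> M1 \<Longrightarrow> n \<ge> M1 \<Longrightarrow> dist (G (k m) (\<tau> i)) (G (k n) (\<tau> i)) < \<epsilon>/5"
        unfolding Cauchy_def using ep by (metis divide_pos_pos zero_less_numeral)
      obtain M2 where M2: "inverse (real (Suc M2)) < \<epsilon>/5" using reals_Archimedean[of "\<epsilon>/5"] ep by auto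
      have hsm: "hn (k n) < \<epsilon>/5" if "n \<ge> M2" for n
      proof -
        have "inverse (real (Suc n)) \<le> inverse (real (Suc M2))" using that by (simp add: field_simps)
        then show ?thesis using hk_le[of n] M2 by linarith
      qed
      show "\<exists>M. \<forall>m\<ge>M. \<forall>n\<ge>M. dist (G (k m) t) (G (k n) t) < \<epsilon>"
      proof (intro exI[of _ "max M1 M2"] allI impI)
        fix m n assume m: "max M1 M2 \<le> m" and n: "max M1 M2 \<le> n"
        have "dist (G (k m) t) (G (k n) t) \<le> dist (G (k m) t) (G (k m) (\<tau> i)) +
            dist (G (k m) (\<tau> i)) (G (k n) (\<tau> i)) + dist (G (k n) (\<tau> i)) (G (k n) t)"
          by (metis dist_triangle order_trans add_right_mono dist_triangle)
        moreover have "dist (G (k m) t) (G (k m) (\<tau> i)) < \<epsilon>/5 + \<epsilon>/5"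
          using G_lip[of "k m" t "\<tau> i"] tq hsm[of m] m by simp
        moreover have "dist (G (k n) (\<tau> i)) (G (k n) t) < \<epsilon>/5 + \<epsilon>/5"
          using G_lip[of "k n" "\<tau> i" t] tq hsm[of n] n by (simp add: abs_minus_commute)
        moreover have "dist (G (k m) (\<tau> i)) (G (k n) (\<tau> i)) < \<epsilon>/5" using M1 m n by simp
        ultimately show "dist (G (k m) t) (G (k n) t) < \<epsilon>" by linarith
      qed
    qed
    moreover have "\<forall>n. G (k n) t \<in> cball x (1/2)" using G_in by simp
    moreover have cc: "complete (cball x (1/2))" by (rule compact_imp_complete[OF cK2])
    ultimately have "\<exists>l\<in>cball x (1/2). (\<lambda>n. G (k n) t) \<longlonglongrightarrow> l"
      using cc[unfolded complete_def, rule_format, of "\<lambda>n. G (k n) t"] by blast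
    then show ?thesis by blast
  qed
  define \<gamma> where "\<gamma> t = lim (\<lambda>n. G (k n) t)" for t
  have \<gamma>_lim: "(\<lambda>n. G (k n) t) \<longlonglongrightarrow> \<gamma> t" if "t \<in> {0..1/2}" for t
    using conv[OF that] unfolding \<gamma>_def by (metis limI)
  have \<gamma>0: "\<gamma> 0 = x"
  proof -
    have "(\<lambda>n. G (k n) 0) \<longlonglongrightarrow> x" by (simp add: G0)
    then show ?thesis using \<gamma>_lim[of 0] LIMSEQ_unique by auto
  qed
  have \<gamma>lip: "dist (\<gamma> s) (\<gamma> t) \<le> \<bar>s - t\<bar>" if st: "s \<in> {0..1/2}" "t \<in> {0..1/2}" for s t
  proof -
    have "dist (\<gamma> s) (\<gamma> t) \<le> \<bar>s - t\<bar> + 0"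
    proof (rule LIMSEQ_le[OF tendsto_dist[OF \<gamma>_lim[OF st(1)] \<gamma>_lim[OF st(2)]]
          tendsto_add[OF tendsto_const hk0]])
      show "\<exists>N. \<forall>n\<ge>N. dist (G (k n) s) (G (k n) t) \<le> \<bar>s - t\<bar> + hn (k n)"
        using G_lip[of "k _" s t] cl_id[OF st(1)] cl_id[OF st(2)] by auto
    qed
    then show ?thesis by simp
  qed
  have c\<gamma>: "continuous_on {0..1/2} \<gamma>"
    unfolding continuous_on_iff
  proof (intro ballI allI impI)
    fix t e :: real assume "t \<in> {0..1/2}" "e > 0"
    show "\<exists>d>0. \<forall>t'\<in>{0..1/2}. dist t' t < d \<longrightarrow> dist (\<gamma> t') (\<gamma> t) < e"
    proof (intro exI[of _ e] conjI ballI impI)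
      fix t' assume "t' \<in> {0..1/2}" "dist t' t < e"
      then show "dist (\<gamma> t') (\<gamma> t) < e" using \<gamma>lip[of t' t] \<open>t \<in> {0..1/2}\<close> by (simp add: dist_real_def)
    qed (use \<open>e > 0\<close> in auto)
  qed
  have fC: "isCont f y" for y using f_cont continuous_on_eq_continuous_at[of UNIV f] by simp
  have sC: "isCont sr y" for y using sc continuous_on_eq_continuous_at[of UNIV sr] by simp
  have cg: "continuous_on {0..1/2} (\<lambda>t. f (\<gamma> t))"
    by (rule continuous_on_compose2[OF f_cont c\<gamma>]) auto
  have cp: "continuous_on {0..1/2} (\<lambda>t. sr (\<gamma> t))"
    by (rule continuous_on_compose2[OF sc c\<gamma>]) auto
  have U: "\<exists>d>0. \<forall>b. a < b \<and> b < a + d \<and> b \<le> 1/2 \<longrightarrow>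
      f (\<gamma> b) \<le> f (\<gamma> a) - (b - a) * (sr (\<gamma> a) - e)"
    if a: "a \<in> {0..<1/2}" and e: "e > 0" for a e
  proof -
    obtain \<delta> N where \<delta>: "\<delta> > 0" and N: "\<And>n a b. n \<ge> N \<Longrightarrow> 0 \<le> a \<and> a \<le> b \<and> b \<le> 1/2 \<and> b - a < \<delta> \<Longrightarrow>
      f (G n b) \<le> f (G n a) - (b - a) * (sr (G n a) - e) + hn n * (M + e)"
      using Un[OF e] by blast
    show ?thesis
    proof (intro exI[of _ \<delta>] conjI allI impI)
      fix b assume b: "a < b \<and> b < a + \<delta> \<and> b \<le> 1/2"
      have ain: "a \<in> {0..1/2}" and bin: "b \<in> {0..1/2}" using a b by auto
      have "f (\<gamma> b) \<le> f (\<gamma> a) - (b - a) * (sr (\<gamma> a) - e) + 0 * (M + e)"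
      proof (rule LIMSEQ_le)
        show "(\<lambda>n. f (G (k n) b)) \<longlonglongrightarrow> f (\<gamma> b)"
          by (rule isCont_tendsto_compose[OF fC \<gamma>_lim[OF bin]])
        show "(\<lambda>n. f (G (k n) a) - (b - a) * (sr (G (k n) a) - e) + hn (k n) * (M + e)) \<longlonglongrightarrow>
            f (\<gamma> a) - (b - a) * (sr (\<gamma> a) - e) + 0 * (M + e)"
          by (intro tendsto_intros isCont_tendsto_compose[OF fC \<gamma>_lim[OF ain]]
              isCont_tendsto_compose[OF sC \<gamma>_lim[OF ain]] hk0)
        show "\<exists>N'. \<forall>n\<ge>N'. f (G (k n) b) \<le> f (G (k n) a) - (b - a) * (sr (G (k n) a) - e) + hn (k n) * (M + e)"
        proof (intro exI[of _ N] allI impI)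
          fix n assume "N \<le> n"
          then have "N \<le> k n" using kn[of n] by linarith
          then show "f (G (k n) b) \<le> f (G (k n) a) - (b - a) * (sr (G (k n) a) - e) + hn (k n) * (M + e)"
            using N[of "k n" a b] a b by auto
        qed
      qed
      then show "f (\<gamma> b) \<le> f (\<gamma> a) - (b - a) * (sr (\<gamma> a) - e)" by simp
    qed (use \<delta> in auto)
  qed
  have L: "\<exists>d>0. \<forall>b. a < b \<and> b < a + d \<and> b \<le> 1/2 \<longrightarrow>
      f (\<gamma> a) - (b - a) * (sr (\<gamma> a) + e) \<le> f (\<gamma> b)"
    if a: "a \<in> {0..<1/2}" and e: "e > 0" for a e
  proof -
    have "local_slope f (\<gamma> a) = ereal (sr (\<gamma> a))"
      using slope_real[OF slope_finite] by (simp add: sr_def)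
    from slope_ge[OF this e] obtain d where d: "d > 0"
      "\<And>w. dist w (\<gamma> a) < d \<Longrightarrow> f (\<gamma> a) - f w \<le> (sr (\<gamma> a) + e) * dist (\<gamma> a) w" by blast
    show ?thesis
    proof (intro exI[of _ d] conjI allI impI)
      fix b assume b: "a < b \<and> b < a + d \<and> b \<le> 1/2"
      have ain: "a \<in> {0..1/2}" and bin: "b \<in> {0..1/2}" using a b by auto
      have db: "dist (\<gamma> a) (\<gamma> b) \<le> b - a" using \<gamma>lip[OF ain bin] b by simp
      then have "dist (\<gamma> b) (\<gamma> a) < d" using b by (simp add: dist_commute)
      then have "f (\<gamma> a) - f (\<gamma> b) \<le> (sr (\<gamma> a) + e) * dist (\<gamma> a) (\<gamma> b)" by (rule d(2))
      also have "\<dots> \<le> (sr (\<gamma> a) + e) * (b - a)"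
        using db sr0[of "\<gamma> a"] e by (intro mult_left_mono) auto
      finally show "f (\<gamma> a) - (b - a) * (sr (\<gamma> a) + e) \<le> f (\<gamma> b)" by (simp add: algebra_simps)
    qed (use d in auto)
  qed
  have final: "f (\<gamma> t) = f (\<gamma> 0) - integral {0..t} (\<lambda>s. sr (\<gamma> s))" if "t \<in> {0..1/2}" for t
    by (rule integral_char[of "1/2" "\<lambda>t. f (\<gamma> t)" "\<lambda>t. sr (\<gamma> t)", OF _ cg cp U L that]) auto
  show ?thesis
  proof (intro exI[of _ "1/2 :: real"] exI[of _ \<gamma>] conjI ballI)
    show "\<gamma> 0 = x" by (rule \<gamma>0)
    fix s t :: real assume "s \<in> {0..1/2}" "t \<in> {0..1/2}"
    then show "dist (\<gamma> s) (\<gamma> t) \<le> \<bar>s - t\<bar>" by (rule \<gamma>lip)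
  next
    fix t :: real assume "t \<in> {0..1/2}"
    then show "f (\<gamma> t) = f x - integral {0..t} (\<lambda>s. real_of_ereal (local_slope f (\<gamma> s)))"
      using final \<gamma>0 by (simp add: sr_def)
  qed simp
qed


end
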